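(* For all integers $n\geqslant 1$ and $d\geqslant 2$, \[ f(n,d)\leqslant n+\log_2 n\cdot f(n,d-1). \]
   Context: A box in $\mathbb R^d$ is a set of the form $[a_1,b_1]\times\cdots\times[a_d,b_d]$ (edges parallel to the coordinate axes). For a family $\mathscr B$ of boxes, $\nu(\mathscr B)$ is the maximal number of pairwise disjoint members of $\mathscr B$, and $\tau(\mathscr B)$ is the minimal number of points in a set meeting every member of $\mathscr B$. For integers $n\geqslant 1$, $d\geqslant 1$, $f(n,d)$ denotes the supremum of $\tau(\mathscr B)$ over all families $\mathscr B$ of boxes in $\mathbb R^d$ with $\nu(\mathscr B)=n$; by convention $f(0,d)=0$. The statement presupposes that these quantities are finite. *)

theory Defs
  imports "HOL-Analysis.Analysis" "HOL-Library.Extended_Real" "HOL-Library.Disjoint_Sets"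
begin

text \<open>Points of R^d are represented as functions nat => real that vanish at all
  coordinates i >= d (so that the dimension d can vary inside one statement).\<close>

definition box :: "nat \<Rightarrow> (nat \<Rightarrow> real) \<Rightarrow> (nat \<Rightarrow> real) \<Rightarrow> (nat \<Rightarrow> real) set" where
  "box d a b = {x. (\<forall>i<d. a i \<le> x i \<and> x i \<le> b i) \<and> (\<forall>i\<ge>d. x i = 0)}"

definition is_box :: "nat \<Rightarrow> (nat \<Rightarrow> real) set \<Rightarrow> bool" where
  "is_box d B \<longleftrightarrow> (\<exists>a b. (\<forall>i<d. a i \<le> b i) \<and> B = box d a b)"

definition nu :: "(nat \<Rightarrow> real) set set \<Rightarrow> enat" where
  "nu F = Sup {enat (card S) | S. S \<subseteq> F \<and> finite S \<and> disjoint S}"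

definition tau :: "(nat \<Rightarrow> real) set set \<Rightarrow> enat" where
  "tau F = Inf {enat (card P) | P. finite P \<and> (\<forall>B\<in>F. P \<inter> B \<noteq> {})}"

definition f_box :: "nat \<Rightarrow> nat \<Rightarrow> ereal" where
  "f_box n d = Sup {ereal_of_enat (tau F) | F. (\<forall>B\<in>F. is_box d B) \<and> nu F = enat n}"

end

theory Submission
  imports Defs
begin

lemma nu_le_iff: "nu F \<le> enat k \<longleftrightarrow> (\<forall>S. S \<subseteq> F \<and> finite S \<and> disjoint S \<longrightarrow> card S \<le> k)"
  unfolding nu_def Sup_le_iff
proof (intro iffI allI impI)
  fix S assume H: "\<forall>a\<in>{enat (card S) | S. S \<subseteq> F \<and> finite S \<and> disjoint S}. a \<le> enat k"
    and S: "S \<subseteq> F \<and> finite S \<and> disjoint S"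
  then have "enat (card S) \<le> enat k" by blast
  then show "card S \<le> k" by simp
qed auto

lemma nu_ge: "S \<subseteq> F \<Longrightarrow> finite S \<Longrightarrow> disjoint S \<Longrightarrow> enat (card S) \<le> nu F"
  unfolding nu_def by (rule Sup_upper) auto

lemma nu_attained:
  assumes "nu F = enat a"
  shows "\<exists>S. S \<subseteq> F \<and> finite S \<and> disjoint S \<and> card S = a"
proof -
  let ?X = "{enat (card S) | S. S \<subseteq> F \<and> finite S \<and> disjoint S}"
  have ne: "?X \<noteq> {}" by (rule ccontr) (auto intro: exI[of _ "{}"])
  have "Sup ?X = enat a" using assms unfolding nu_def .
  then have fin: "finite ?X" and "Max ?X = enat a" using ne unfolding Sup_enat_def by (auto split: if_splits)
  then have "enat a \<in> ?X" using Max_in[OF fin ne] by simp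
  then show ?thesis by auto
qed

lemma tau_le: "finite P \<Longrightarrow> (\<forall>B\<in>F. P \<inter> B \<noteq> {}) \<Longrightarrow> tau F \<le> enat (card P)"
  unfolding tau_def by (rule Inf_lower) auto

lemma tau_ge: "(\<And>P. finite P \<Longrightarrow> (\<forall>B\<in>F. P \<inter> B \<noteq> {}) \<Longrightarrow> x \<le> enat (card P)) \<Longrightarrow> x \<le> tau F"
  unfolding tau_def by (rule Inf_greatest) auto

lemma tau_attained:
  assumes "tau F = enat k"
  shows "\<exists>P. finite P \<and> (\<forall>B\<in>F. P \<inter> B \<noteq> {}) \<and> card P = k"
proof -
  let ?X = "{enat (card P) | P. finite P \<and> (\<forall>B\<in>F. P \<inter> B \<noteq> {})}"
  have X: "Inf ?X = enat k" using assms unfolding tau_def .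
  have ne: "?X \<noteq> {}"
  proof
    assume E: "?X = {}"
    have "Inf ?X = \<infinity>" by (simp only: E Inf_empty top_enat_def)
    with X show False by simp
  qed
  then obtain y where "y \<in> ?X" by blast
  then have "(LEAST x. x \<in> ?X) \<in> ?X" by (rule LeastI)
  then have "Inf ?X \<in> ?X" using ne unfolding Inf_enat_def by simp
  then have "enat k \<in> ?X" using X by simp
  then show ?thesis by auto
qed

lemma tau_union: "tau (F \<union> G) \<le> tau F + tau G"
proof (cases "tau F = \<infinity> \<or> tau G = \<infinity>")
  case True then show ?thesis by auto
next
  case False
  then obtain a b where "tau F = enat a" "tau G = enat b" by auto
  then obtain P Q where P: "finite P" "\<forall>B\<in>F. P \<inter> B \<noteq> {}" "card P = a"
    and Q: "finite Q" "\<forall>B\<in>G. Q \<inter> B \<noteq> {}" "card Q = b"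
    using tau_attained[of F a] tau_attained[of G b] by blast
  have "tau (F \<union> G) \<le> enat (card (P \<union> Q))"
    by (rule tau_le) (use P Q in auto)
  also have "\<dots> \<le> enat (card P + card Q)" using card_Un_le by simp
  finally show ?thesis using P Q \<open>tau F = enat a\<close> \<open>tau G = enat b\<close> by simp
qed

lemma nu_image:
  assumes "inj \<phi>"
  shows "nu ((`) \<phi> ` F) = nu F"
proof -
  have ii: "inj ((`) \<phi>)" using assms by (simp add: inj_image_eq_iff inj_def)
  have "{enat (card S) | S. S \<subseteq> (`) \<phi> ` F \<and> finite S \<and> disjoint S}
      = {enat (card S) | S. S \<subseteq> F \<and> finite S \<and> disjoint S}"
  proof (intro set_eqI iffI)
    fix x assume "x \<in> {enat (card S) | S. S \<subseteq> (`) \<phi> ` F \<and> finite S \<and> disjoint S}"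
    then obtain S where S: "x = enat (card S)" "S \<subseteq> (`) \<phi> ` F" "finite S" "disjoint S" by blast
    obtain T where T: "T \<subseteq> F" "S = (`) \<phi> ` T" using S(2) by (rule subset_imageE)
    have inj: "inj_on ((`) \<phi>) T" using ii by (rule inj_on_subset) simp
    have c: "card S = card T" using T(2) card_image[OF inj] by simp
    have f: "finite T" using finite_imageD[of "(`) \<phi>" T] S(3) T(2) inj by simp
    have "disjoint T" unfolding disjoint_def
    proof (intro ballI impI)
      fix A B assume AB: "A\<in>T" "B\<in>T" "A\<noteq>B"
      then have "\<phi>`A \<noteq> \<phi>`B" using assms by (simp add: inj_image_eq_iff)
      moreover have "\<phi>`A \<in> S" "\<phi>`B \<in> S" unfolding T(2) using AB by (auto intro: imageI)
      ultimately have "\<phi>`A \<inter> \<phi>`B = {}" using S(4) unfolding disjoint_def by auto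
      then show "A \<inter> B = {}" by auto
    qed
    then have "T \<subseteq> F \<and> finite T \<and> disjoint T" using T f by blast
    then show "x \<in> {enat (card S) | S. S \<subseteq> F \<and> finite S \<and> disjoint S}" using S(1) c by blast
  next
    fix x assume "x \<in> {enat (card S) | S. S \<subseteq> F \<and> finite S \<and> disjoint S}"
    then obtain T where T: "x = enat (card T)" "T \<subseteq> F" "finite T" "disjoint T" by blast
    have inj: "inj_on ((`) \<phi>) T" using ii by (rule inj_on_subset) simp
    have c: "card ((`) \<phi> ` T) = card T" by (rule card_image[OF inj])
    have "disjoint ((`) \<phi> ` T)" unfolding disjoint_def
    proof (intro ballI impI)
      fix A B assume AB: "A\<in>(`) \<phi> ` T" "B\<in>(`) \<phi> ` T" "A\<noteq>B"
      from AB(1) obtain A' where A': "A' \<in> T" "A = \<phi>`A'" by (rule imageE)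
      from AB(2) obtain B' where B': "B' \<in> T" "B = \<phi>`B'" by (rule imageE)
      have "A' \<noteq> B'" using AB A' B' by auto
      then have "A' \<inter> B' = {}" using T(4) A' B' unfolding disjoint_def by auto
      then show "A \<inter> B = {}" using A' B' assms by (auto simp: inj_def)
    qed
    then have "(`) \<phi> ` T \<subseteq> (`) \<phi> ` F \<and> finite ((`) \<phi> ` T) \<and> disjoint ((`) \<phi> ` T)"
      using T by blast
    then show "x \<in> {enat (card S) | S. S \<subseteq> (`) \<phi> ` F \<and> finite S \<and> disjoint S}"
      using T(1) c by (metis (mono_tags, lifting) mem_Collect_eq)
  qed
  then show ?thesis unfolding nu_def by simp
qed

lemma tau_image:
  assumes "inj \<phi>"
  shows "tau ((`) \<phi> ` F) = tau F"
proof (rule antisym)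
  show "tau ((`) \<phi> ` F) \<le> tau F"
  proof (rule tau_ge)
    fix P assume P: "finite P" "\<forall>B\<in>F. P \<inter> B \<noteq> {}"
    have "tau ((`) \<phi> ` F) \<le> enat (card (\<phi> ` P))"
    proof (rule tau_le)
      show "finite (\<phi> ` P)" using P by simp
      show "\<forall>B\<in>(`) \<phi> ` F. \<phi> ` P \<inter> B \<noteq> {}"
      proof
        fix B' assume "B' \<in> (`) \<phi> ` F"
        then obtain B where B: "B \<in> F" "B' = \<phi> ` B" by (rule imageE)
        then obtain x where "x \<in> P" "x \<in> B" using P(2) by auto
        then have "\<phi> x \<in> \<phi> ` P \<inter> B'" using B by auto
        then show "\<phi> ` P \<inter> B' \<noteq> {}" by auto
      qed
    qed
    also have "\<dots> \<le> enat (card P)" using card_image_le[OF P(1)] by simp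
    finally show "tau ((`) \<phi> ` F) \<le> enat (card P)" .
  qed
  show "tau F \<le> tau ((`) \<phi> ` F)"
  proof (rule tau_ge)
    fix Q assume Q: "finite Q" "\<forall>B\<in>(`) \<phi> ` F. Q \<inter> B \<noteq> {}"
    have fin: "finite (\<phi> -` Q)" using Q(1) assms by (simp add: finite_vimageI)
    have "tau F \<le> enat (card (\<phi> -` Q))"
    proof (rule tau_le[OF fin], rule ballI)
      fix B assume "B \<in> F"
      then have "\<phi> ` B \<in> (`) \<phi> ` F" by (rule imageI)
      then have "Q \<inter> \<phi> ` B \<noteq> {}" using Q(2) by auto
      then obtain x where "x \<in> B" "\<phi> x \<in> Q" by auto
      then show "\<phi> -` Q \<inter> B \<noteq> {}" by auto
    qed
    also have "card (\<phi> -` Q) \<le> card Q"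
    proof -
      have "card (\<phi> -` Q) = card (\<phi> ` (\<phi> -` Q))"
        by (rule card_image[symmetric]) (use assms in \<open>auto intro: inj_on_subset\<close>)
      also have "\<dots> \<le> card Q" by (rule card_mono[OF Q(1)]) auto
      finally show ?thesis .
    qed
    finally show "tau F \<le> enat (card Q)" by simp
  qed
qed


lemma box_nonempty: "is_box e B \<Longrightarrow> B \<noteq> {}"
proof -
  assume "is_box e B"
  then obtain a b where ab: "\<forall>i<e. a i \<le> b i" "B = box e a b" unfolding is_box_def by blast
  have "(\<lambda>i. if i < e then a i else 0) \<in> box e a b" using ab(1) unfolding box_def by auto
  then show ?thesis using ab(2) by blast
qed

definition sq :: "real \<Rightarrow> (nat \<Rightarrow> real) \<Rightarrow> (nat \<Rightarrow> real)" where
  "sq t x = x(0 := t + arctan (x 0))"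

lemma inj_sq: "inj (sq t)"
proof (rule injI)
  fix x y assume "sq t x = sq t y"
  then have 1: "\<And>i. (x(0 := t + arctan (x 0))) i = (y(0 := t + arctan (y 0))) i" unfolding sq_def by metis
  have "x 0 = y 0" using 1[of 0] by (simp add: arctan_eq_iff)
  moreover have "x i = y i" if "i \<noteq> 0" for i using 1[of i] that by simp
  ultimately show "x = y" by (metis ext)
qed

lemma sq_slab: "x \<in> sq t ` B \<Longrightarrow> t - pi/2 < x 0 \<and> x 0 < t + pi/2"
  unfolding sq_def using arctan_bounded by auto

lemma sq_box:
  assumes e: "0 < e" and ab: "\<forall>i<e. a i \<le> b i"
  shows "sq t ` box e a b = box e (a(0 := t + arctan (a 0))) (b(0 := t + arctan (b 0)))"
proof (intro set_eqI iffI)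
  fix y assume "y \<in> sq t ` box e a b"
  then obtain x where x: "x \<in> box e a b" "y = sq t x" by blast
  then have xb: "\<forall>i<e. a i \<le> x i \<and> x i \<le> b i" "\<forall>i\<ge>e. x i = 0" by (simp_all add: box_def)
  then have "a 0 \<le> x 0" "x 0 \<le> b 0" using e by auto
  then have ar: "arctan (a 0) \<le> arctan (x 0)" "arctan (x 0) \<le> arctan (b 0)" by (auto simp: arctan_le_iff)
  show "y \<in> box e (a(0 := t + arctan (a 0))) (b(0 := t + arctan (b 0)))"
  proof -
    have 1: "\<forall>i<e. (a(0 := t + arctan (a 0))) i \<le> y i \<and> y i \<le> (b(0 := t + arctan (b 0))) i"
    proof (intro allI impI)
      fix i assume "i < e"
      then show "(a(0 := t + arctan (a 0))) i \<le> y i \<and> y i \<le> (b(0 := t + arctan (b 0))) i"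
        using xb ar unfolding x(2) sq_def by (cases "i = 0") auto
    qed
    have 2: "\<forall>i\<ge>e. y i = 0"
    proof (intro allI impI)
      fix i assume "e \<le> i"
      then have "i \<noteq> 0" using e by auto
      then show "y i = 0" using xb \<open>e \<le> i\<close> unfolding x(2) sq_def by auto
    qed
    show ?thesis using 1 2 unfolding box_def by blast
  qed
next
  fix y assume y: "y \<in> box e (a(0 := t + arctan (a 0))) (b(0 := t + arctan (b 0)))"
  then have y0: "t + arctan (a 0) \<le> y 0" "y 0 \<le> t + arctan (b 0)" using e unfolding box_def by (auto dest: spec[of _ 0])
  have at: "arctan (tan (y 0 - t)) = y 0 - t"
    using y0 arctan_bounded[of "a 0"] arctan_bounded[of "b 0"] by (intro arctan_tan) auto
  define x where "x = y(0 := tan (y 0 - t))"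
  have "arctan (a 0) \<le> arctan (x 0)" "arctan (x 0) \<le> arctan (b 0)" using y0 at unfolding x_def by auto
  then have "a 0 \<le> x 0" "x 0 \<le> b 0" by (auto simp: arctan_le_iff)
  then have "x \<in> box e a b" using y e unfolding box_def x_def by auto
  moreover have "sq t x = y" unfolding sq_def x_def using at by (auto simp: fun_eq_iff)
  ultimately show "y \<in> sq t ` box e a b" by blast
qed

lemma is_box_sq: "0 < e \<Longrightarrow> is_box e B \<Longrightarrow> is_box e (sq t ` B)"
proof -
  assume e: "0 < e" and "is_box e B"
  then obtain a b where ab: "\<forall>i<e. a i \<le> b i" "B = box e a b" unfolding is_box_def by blast
  have "\<forall>i<e. (a(0 := t + arctan (a 0))) i \<le> (b(0 := t + arctan (b 0))) i"
    using ab(1) e by (auto simp: arctan_le_iff)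
  then show ?thesis unfolding is_box_def using sq_box[OF e ab(1)] ab(2) by blast
qed

lemma sep_union:
  assumes F1: "\<forall>B\<in>F1. B \<noteq> {} \<and> B \<subseteq> {x. x 0 < c}"
    and F2: "\<forall>B\<in>F2. B \<noteq> {} \<and> B \<subseteq> {x. x 0 > c}"
    and n1: "nu F1 = enat a" and n2: "nu F2 = enat b"
  shows "nu (F1 \<union> F2) = enat (a + b)" "tau F1 + tau F2 \<le> tau (F1 \<union> F2)"
proof -
  have sep: "A \<inter> B = {}" if "A \<in> F1" "B \<in> F2" for A B
    using F1 F2 that by fastforce
  have sep2: "F1 \<inter> F2 = {}"
  proof (rule ccontr)
    assume "F1 \<inter> F2 \<noteq> {}"
    then obtain A where "A \<in> F1" "A \<in> F2" by blast
    then have "A \<inter> A = {}" by (rule sep)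
    then show False using F1 \<open>A \<in> F1\<close> by auto
  qed
  have "nu (F1 \<union> F2) \<le> enat (a + b)"
    unfolding nu_le_iff
  proof (intro allI impI)
    fix S assume S: "S \<subseteq> F1 \<union> F2 \<and> finite S \<and> disjoint S"
    have d1: "disjoint (S \<inter> F1)" "disjoint (S \<inter> F2)" using S pairwise_subset[of disjnt S] by auto
    have "card (S \<inter> F1) \<le> a" using n1 S d1 nu_le_iff[of F1 a] by auto
    moreover have "card (S \<inter> F2) \<le> b" using n2 S d1 nu_le_iff[of F2 b] by auto
    moreover have "card S \<le> card (S \<inter> F1) + card (S \<inter> F2)"
    proof -
      have "S = (S \<inter> F1) \<union> (S \<inter> F2)" using S by blast
      then have "card S = card ((S \<inter> F1) \<union> (S \<inter> F2))" by simp
      also have "\<dots> \<le> card (S \<inter> F1) + card (S \<inter> F2)" by (rule card_Un_le)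
      finally show ?thesis .
    qed
    ultimately show "card S \<le> a + b" by simp
  qed
  moreover have "enat (a + b) \<le> nu (F1 \<union> F2)"
  proof -
    obtain S1 where S1: "S1 \<subseteq> F1" "finite S1" "disjoint S1" "card S1 = a" using nu_attained[OF n1] by blast
    obtain S2 where S2: "S2 \<subseteq> F2" "finite S2" "disjoint S2" "card S2 = b" using nu_attained[OF n2] by blast
    have "S1 \<inter> S2 = {}" using S1(1) S2(1) sep2 by blast
    then have c: "card (S1 \<union> S2) = a + b" using S1 S2 by (simp add: card_Un_disjoint)
    have d: "disjoint (S1 \<union> S2)" unfolding disjoint_def
    proof (intro ballI impI)
      fix A B assume AB: "A \<in> S1 \<union> S2" "B \<in> S1 \<union> S2" "A \<noteq> B"
      show "A \<inter> B = {}"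
      proof (cases "A \<in> S1")
        case True
        show ?thesis
        proof (cases "B \<in> S1")
          case True then show ?thesis using \<open>A \<in> S1\<close> AB(3) S1(3) unfolding disjoint_def by auto
        next
          case False then have "B \<in> S2" using AB by auto
          then show ?thesis using sep \<open>A \<in> S1\<close> S1(1) S2(1) by auto
        qed
      next
        case False then have A2: "A \<in> S2" using AB by auto
        show ?thesis
        proof (cases "B \<in> S1")
          case True then show ?thesis using sep[of B A] A2 S1(1) S2(1) by auto
        next
          case False then have "B \<in> S2" using AB by auto
          then show ?thesis using A2 AB(3) S2(3) unfolding disjoint_def by auto
        qed
      qed
    qed
    have "enat (card (S1 \<union> S2)) \<le> nu (F1 \<union> F2)"
      by (rule nu_ge) (use S1 S2 d in auto)
    then show ?thesis using c by simp
  qed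
  ultimately show "nu (F1 \<union> F2) = enat (a + b)" by (rule antisym)
  show "tau F1 + tau F2 \<le> tau (F1 \<union> F2)"
  proof (rule tau_ge)
    fix Q assume Q: "finite Q" "\<forall>B\<in>F1 \<union> F2. Q \<inter> B \<noteq> {}"
    define Q1 where "Q1 = Q \<inter> {x. x 0 < c}"
    define Q2 where "Q2 = Q \<inter> {x. x 0 > c}"
    have "tau F1 \<le> enat (card Q1)"
    proof (rule tau_le)
      show "finite Q1" using Q(1) unfolding Q1_def by simp
      show "\<forall>B\<in>F1. Q1 \<inter> B \<noteq> {}"
      proof
        fix B assume B: "B \<in> F1"
        then obtain q where "q \<in> Q" "q \<in> B" using Q(2) by blast
        then have "q \<in> Q1 \<inter> B" using F1 B unfolding Q1_def by blast
        then show "Q1 \<inter> B \<noteq> {}" by blast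
      qed
    qed
    moreover have "tau F2 \<le> enat (card Q2)"
    proof (rule tau_le)
      show "finite Q2" using Q(1) unfolding Q2_def by simp
      show "\<forall>B\<in>F2. Q2 \<inter> B \<noteq> {}"
      proof
        fix B assume B: "B \<in> F2"
        then obtain q where "q \<in> Q" "q \<in> B" using Q(2) by blast
        then have "q \<in> Q2 \<inter> B" using F2 B unfolding Q2_def by blast
        then show "Q2 \<inter> B \<noteq> {}" by blast
      qed
    qed
    moreover have "card Q1 + card Q2 \<le> card Q"
    proof -
      have "Q1 \<inter> Q2 = {}" unfolding Q1_def Q2_def by auto
      then have "card Q1 + card Q2 = card (Q1 \<union> Q2)"
        using Q(1) unfolding Q1_def Q2_def by (simp add: card_Un_disjoint)
      also have "\<dots> \<le> card Q" using Q(1) unfolding Q1_def Q2_def by (intro card_mono) auto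
      finally show ?thesis .
    qed
    ultimately have "tau F1 + tau F2 \<le> enat (card Q1) + enat (card Q2)" by (intro add_mono)
    also have "\<dots> \<le> enat (card Q)" using \<open>card Q1 + card Q2 \<le> card Q\<close> by simp
    finally show "tau F1 + tau F2 \<le> enat (card Q)" .
  qed
qed


definition pt :: "nat \<Rightarrow> (nat \<Rightarrow> real)" where "pt i = (\<lambda>k. if k = 0 then real i else 0)"

lemma box_pt: "0 < e \<Longrightarrow> box e (pt i) (pt i) = {pt i}"
proof (intro set_eqI iffI)
  fix x assume e: "0 < e" and x: "x \<in> box e (pt i) (pt i)"
  have "x k = pt i k" for k
  proof (cases "k < e")
    case True then show ?thesis using x unfolding box_def by (auto intro: order_antisym)
  next
    case False then show ?thesis using x e unfolding box_def pt_def by auto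
  qed
  then show "x \<in> {pt i}" by (auto simp: fun_eq_iff)
next
  fix x assume e: "0 < e" and "x \<in> {pt i}"
  then show "x \<in> box e (pt i) (pt i)" unfolding box_def pt_def by auto
qed

lemma fam_exists:
  assumes "0 < e"
  shows "\<exists>F. (\<forall>B\<in>F. is_box e B) \<and> nu F = enat j"
proof -
  define E where "E = (\<lambda>i. {pt i}) ` {..<j}"
  have ib: "\<forall>B\<in>E. is_box e B"
    unfolding E_def is_box_def using box_pt[OF assms] by (auto intro!: exI[of _ "pt _"])
  have injp: "inj pt" unfolding pt_def inj_def by (auto simp: fun_eq_iff)
  then have injE: "inj_on (\<lambda>i. {pt i}) {..<j}" unfolding inj_on_def inj_def by auto
  have cE: "card E = j" unfolding E_def using card_image[OF injE] by simp
  have fE: "finite E" unfolding E_def by simp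
  have dE: "disjoint E" unfolding E_def disjoint_def by auto
  have "nu E \<le> enat j" unfolding nu_le_iff
  proof (intro allI impI)
    fix S assume "S \<subseteq> E \<and> finite S \<and> disjoint S"
    then show "card S \<le> j" using card_mono[OF fE] cE by auto
  qed
  moreover have "enat j \<le> nu E" using nu_ge[of E E] fE dE cE by simp
  ultimately show ?thesis using ib by (intro exI[of _ E]) auto
qed

lemma f_box_SUP: "f_box n e = (SUP F\<in>{F. (\<forall>B\<in>F. is_box e B) \<and> nu F = enat n}. ereal_of_enat (tau F))"
  unfolding f_box_def by (simp add: setcompr_eq_image)

lemma tau_le_f_box: "\<forall>B\<in>F. is_box e B \<Longrightarrow> nu F = enat n \<Longrightarrow> ereal_of_enat (tau F) \<le> f_box n e"
  unfolding f_box_SUP by (rule SUP_upper) auto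

lemma f_box_nonneg: "0 < e \<Longrightarrow> 0 \<le> f_box n e"
proof -
  assume "0 < e"
  then obtain F where "\<forall>B\<in>F. is_box e B" "nu F = enat n" using fam_exists by blast
  then have "ereal_of_enat (tau F) \<le> f_box n e" by (rule tau_le_f_box)
  then show ?thesis using order_trans[of 0 "ereal_of_enat (tau F)"] by simp
qed

lemma superadd:
  assumes e: "0 < e"
  shows "f_box a e + f_box b e \<le> f_box (a + b) e"
proof -
  let ?FA = "{F. (\<forall>B\<in>F. is_box e B) \<and> nu F = enat a}"
  let ?FB = "{F. (\<forall>B\<in>F. is_box e B) \<and> nu F = enat b}"
  let ?g = "\<lambda>F. ereal_of_enat (tau F)"
  have neA: "?FA \<noteq> {}" and neB: "?FB \<noteq> {}" using fam_exists[OF e] by auto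
  have key: "?g F1 + ?g F2 \<le> f_box (a + b) e" if F1: "F1 \<in> ?FA" and F2: "F2 \<in> ?FB" for F1 F2
  proof -
    define G1 where "G1 = (`) (sq 0) ` F1"
    define G2 where "G2 = (`) (sq 10) ` F2"
    have pi4: "pi < 4" by (rule pi_less_4)
    have s1: "\<forall>B\<in>G1. B \<noteq> {} \<and> B \<subseteq> {x. x 0 < 5}"
    proof
      fix B assume "B \<in> G1"
      then obtain B0 where B0: "B0 \<in> F1" "B = sq 0 ` B0" unfolding G1_def by blast
      have "B0 \<noteq> {}" using B0(1) F1 box_nonempty by blast
      moreover have "B \<subseteq> {x. x 0 < 5}" using sq_slab[of _ 0 B0] B0(2) pi4 by fastforce
      ultimately show "B \<noteq> {} \<and> B \<subseteq> {x. x 0 < 5}" using B0(2) by blast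
    qed
    have s2: "\<forall>B\<in>G2. B \<noteq> {} \<and> B \<subseteq> {x. x 0 > 5}"
    proof
      fix B assume "B \<in> G2"
      then obtain B0 where B0: "B0 \<in> F2" "B = sq 10 ` B0" unfolding G2_def by blast
      have "B0 \<noteq> {}" using B0(1) F2 box_nonempty by blast
      moreover have "B \<subseteq> {x. x 0 > 5}" using sq_slab[of _ 10 B0] B0(2) pi4 by fastforce
      ultimately show "B \<noteq> {} \<and> B \<subseteq> {x. x 0 > 5}" using B0(2) by blast
    qed
    have n1: "nu G1 = enat a" unfolding G1_def using nu_image[OF inj_sq] F1 by simp
    have n2: "nu G2 = enat b" unfolding G2_def using nu_image[OF inj_sq] F2 by simp
    have t1: "tau G1 = tau F1" unfolding G1_def using tau_image[OF inj_sq] by simp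
    have t2: "tau G2 = tau F2" unfolding G2_def using tau_image[OF inj_sq] by simp
    have nG: "nu (G1 \<union> G2) = enat (a + b)" by (rule sep_union(1)[OF s1 s2 n1 n2])
    have tG: "tau F1 + tau F2 \<le> tau (G1 \<union> G2)" using sep_union(2)[OF s1 s2 n1 n2] t1 t2 by simp
    have bG: "\<forall>B\<in>G1 \<union> G2. is_box e B"
      unfolding G1_def G2_def using F1 F2 is_box_sq[OF e] by auto
    have "?g F1 + ?g F2 = ereal_of_enat (tau F1 + tau F2)" by (simp add: ereal_of_enat_add)
    also have "\<dots> \<le> ?g (G1 \<union> G2)" using tG by simp
    also have "\<dots> \<le> f_box (a + b) e" by (rule tau_le_f_box[OF bG nG])
    finally show ?thesis .
  qed
  have "f_box a e + f_box b e = (SUP F1\<in>?FA. ?g F1 + f_box b e)"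
    unfolding f_box_SUP[of a e]
    by (rule SUP_ereal_add_left[symmetric, OF neA]) (use f_box_nonneg[OF e, of b] in auto)
  also have "\<dots> \<le> f_box (a + b) e"
  proof (rule SUP_least)
    fix F1 assume F1: "F1 \<in> ?FA"
    have "?g F1 + f_box b e = (SUP F2\<in>?FB. ?g F1 + ?g F2)"
      unfolding f_box_SUP[of b e]
      by (rule SUP_ereal_add_right[symmetric, OF neB]) simp
    also have "\<dots> \<le> f_box (a + b) e"
      by (rule SUP_least) (use key F1 in auto)
    finally show "?g F1 + f_box b e \<le> f_box (a + b) e" .
  qed
  finally show ?thesis .
qed

lemma f_box_mono:
  assumes e: "0 < e" and "j \<le> m"
  shows "f_box j e \<le> f_box m e"
proof -
  have "f_box j e = f_box j e + 0" by simp
  also have "\<dots> \<le> f_box j e + f_box (m - j) e" by (intro add_mono) (auto intro: f_box_nonneg[OF e])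
  also have "\<dots> \<le> f_box m e" using superadd[OF e, of j "m - j"] assms(2) by simp
  finally show ?thesis .
qed


lemma proj_box:
  assumes "i < d" "\<forall>j<d. a j \<le> b j"
  shows "(\<lambda>x. x i) ` box d a b = {a i..b i}"
proof (intro set_eqI iffI)
  fix s assume "s \<in> (\<lambda>x. x i) ` box d a b"
  then show "s \<in> {a i..b i}" using assms(1) unfolding box_def by auto
next
  fix s assume s: "s \<in> {a i..b i}"
  define x where "x = (\<lambda>j. if j < d then (if j = i then s else a j) else 0)"
  have "x \<in> box d a b" using s assms unfolding box_def x_def by auto
  moreover have "x i = s" using assms(1) unfolding x_def by simp
  ultimately show "s \<in> (\<lambda>x. x i) ` box d a b" by force
qed

definition lo :: "nat \<Rightarrow> (nat \<Rightarrow> real) set \<Rightarrow> real" where "lo i B = Inf ((\<lambda>x. x i) ` B)"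
definition hi :: "nat \<Rightarrow> (nat \<Rightarrow> real) set \<Rightarrow> real" where "hi i B = Sup ((\<lambda>x. x i) ` B)"

lemma lo_hi_box:
  assumes "i < d" "\<forall>j<d. a j \<le> b j"
  shows "lo i (box d a b) = a i" "hi i (box d a b) = b i"
  unfolding lo_def hi_def proj_box[OF assms] using assms by auto

lemma box_char:
  assumes "is_box d B"
  shows "B = box d (\<lambda>i. lo i B) (\<lambda>i. hi i B)" "\<forall>i<d. lo i B \<le> hi i B"
proof -
  obtain a b where ab: "\<forall>i<d. a i \<le> b i" "B = box d a b" using assms unfolding is_box_def by blast
  have "box d (\<lambda>i. lo i B) (\<lambda>i. hi i B) = box d a b"
    unfolding box_def using lo_hi_box[OF _ ab(1)] ab(2) by auto
  then show "B = box d (\<lambda>i. lo i B) (\<lambda>i. hi i B)" using ab(2) by simp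
  show "\<forall>i<d. lo i B \<le> hi i B" using lo_hi_box[OF _ ab(1)] ab by auto
qed

lemma mem_iff:
  assumes "is_box d B"
  shows "x \<in> B \<longleftrightarrow> (\<forall>i<d. lo i B \<le> x i \<and> x i \<le> hi i B) \<and> (\<forall>i\<ge>d. x i = 0)"
proof -
  define L where "L = (\<lambda>i. lo i B)"
  define U where "U = (\<lambda>i. hi i B)"
  have eq: "B = box d L U" unfolding L_def U_def by (rule box_char(1)[OF assms])
  have "x \<in> B \<longleftrightarrow> (\<forall>i<d. L i \<le> x i \<and> x i \<le> U i) \<and> (\<forall>i\<ge>d. x i = 0)"
    by (subst eq) (simp add: box_def)
  then show ?thesis unfolding L_def U_def .
qed

lemma mem_bounds: "is_box d B \<Longrightarrow> x \<in> B \<Longrightarrow> i < d \<Longrightarrow> lo i B \<le> x i \<and> x i \<le> hi i B"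
  using mem_iff[of d B x] by blast

lemma mem_zero: "is_box d B \<Longrightarrow> x \<in> B \<Longrightarrow> d \<le> i \<Longrightarrow> x i = 0"
  using mem_iff[of d B x] by blast

lemma helly:
  assumes F: "\<forall>B\<in>F. is_box d B" and pw: "\<forall>A\<in>F. \<forall>B\<in>F. A \<inter> B \<noteq> {}" and ne: "F \<noteq> {}"
  shows "\<exists>x. \<forall>B\<in>F. x \<in> B"
proof -
  have lu: "lo i A \<le> hi i B" if "A \<in> F" "B \<in> F" "i < d" for A B i
  proof -
    have "A \<inter> B \<noteq> {}" using pw that(1,2) by simp
    then obtain x where "x \<in> A \<inter> B" by (meson ex_in_conv)
    then have "x \<in> A" "x \<in> B" by simp_all
    have "lo i A \<le> x i" using mem_bounds[OF F[rule_format, OF that(1)] \<open>x\<in>A\<close> that(3)] by simp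
    moreover have "x i \<le> hi i B" using mem_bounds[OF F[rule_format, OF that(2)] \<open>x\<in>B\<close> that(3)] by simp
    ultimately show ?thesis by linarith
  qed
  define x where "x = (\<lambda>i. if i < d then Sup ((\<lambda>B. lo i B) ` F) else 0)"
  obtain B0 where B0: "B0 \<in> F" using ne by blast
  have "x \<in> B" if B: "B \<in> F" for B
    unfolding mem_iff[OF F[rule_format, OF B]]
  proof (intro conjI allI impI)
    fix i assume i: "i < d"
    have bdd: "bdd_above ((\<lambda>B. lo i B) ` F)" by (rule bdd_aboveI2[where M="hi i B0"]) (rule lu[OF _ B0 i])
    have "lo i B \<le> Sup ((\<lambda>B. lo i B) ` F)" by (rule cSup_upper[OF imageI[OF B] bdd])
    then show "lo i B \<le> x i" unfolding x_def using i by simp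
    have "Sup ((\<lambda>B. lo i B) ` F) \<le> hi i B"
    proof (rule cSup_least)
      show "(\<lambda>B. lo i B) ` F \<noteq> {}" using ne by simp
      fix y assume "y \<in> (\<lambda>B. lo i B) ` F"
      then obtain A where "A \<in> F" "y = lo i A" by blast
      then show "y \<le> hi i B" using lu[OF _ B i] by simp
    qed
    then show "x i \<le> hi i B" unfolding x_def using i by simp
  next
    fix i assume "d \<le> i" then show "x i = 0" unfolding x_def by simp
  qed
  then show ?thesis by blast
qed

lemma base_case:
  assumes F: "\<forall>B\<in>F. is_box d B" and n: "nu F \<le> enat 1"
  shows "tau F \<le> enat 1"
proof (cases "F = {}")
  case True
  then have "tau F \<le> enat 0" using tau_le[of "{}" F] by simp
  then show ?thesis using order_trans enat_ord_simps(1) by (metis zero_le_one)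
next
  case False
  have pw: "\<forall>A\<in>F. \<forall>B\<in>F. A \<inter> B \<noteq> {}"
  proof (intro ballI)
    fix A B assume AB: "A \<in> F" "B \<in> F"
    show "A \<inter> B \<noteq> {}"
    proof (cases "A = B")
      case True
      have "A \<noteq> {}" using box_nonempty F AB(1) by blast
      then show ?thesis using True by simp
    next
      case False
      show ?thesis
      proof
        assume dis: "A \<inter> B = {}"
        have "disjoint {A, B}" unfolding disjoint_def using dis by auto
        then have "card {A, B} \<le> 1" using n AB unfolding nu_le_iff by auto
        then show False using False by simp
      qed
    qed
  qed
  obtain x where "\<forall>B\<in>F. x \<in> B" using helly[OF F pw False] by blast
  then have "tau F \<le> enat (card {x})" by (intro tau_le) auto
  then show ?thesis by simp
qed


definition prj :: "nat \<Rightarrow> (nat \<Rightarrow> real) \<Rightarrow> (nat \<Rightarrow> real)" where "prj k x = x(k := 0)"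

lemma prj_box:
  assumes kd: "Suc k = d" and ab: "\<forall>j<d. a j \<le> b j"
  shows "prj k ` box d a b = box k a b"
proof (intro set_eqI iffI)
  fix y assume "y \<in> prj k ` box d a b"
  then obtain x where x: "x \<in> box d a b" "y = prj k x" by blast
  have xb: "\<forall>i<d. a i \<le> x i \<and> x i \<le> b i" "\<forall>i\<ge>d. x i = 0" using x(1) unfolding box_def by simp_all
  have 1: "\<forall>i<k. a i \<le> y i \<and> y i \<le> b i" using xb(1) kd unfolding x(2) prj_def by auto
  have 2: "\<forall>i\<ge>k. y i = 0"
  proof (intro allI impI)
    fix i assume "k \<le> i"
    then show "y i = 0" using xb(2) kd unfolding x(2) prj_def by (cases "i = k") auto
  qed
  show "y \<in> box k a b" using 1 2 unfolding box_def by blast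
next
  fix y assume y: "y \<in> box k a b"
  have yb: "\<forall>i<k. a i \<le> y i \<and> y i \<le> b i" "\<forall>i\<ge>k. y i = 0" using y unfolding box_def by simp_all
  define z where "z = y(k := a k)"
  have 1: "\<forall>i<d. a i \<le> z i \<and> z i \<le> b i"
  proof (intro allI impI)
    fix i assume "i < d"
    then show "a i \<le> z i \<and> z i \<le> b i" using yb(1) ab kd unfolding z_def by (cases "i = k") auto
  qed
  have 2: "\<forall>i\<ge>d. z i = 0" using yb(2) kd unfolding z_def by auto
  have "z \<in> box d a b" using 1 2 unfolding box_def by blast
  moreover have "prj k z = y" unfolding prj_def z_def using yb(2) by (auto simp: fun_eq_iff)
  ultimately show "y \<in> prj k ` box d a b" by (metis imageI)
qed

lemma is_box_prj: "Suc k = d \<Longrightarrow> is_box d B \<Longrightarrow> is_box k (prj k ` B)"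
proof -
  assume kd: "Suc k = d" and "is_box d B"
  then obtain a b where ab: "\<forall>i<d. a i \<le> b i" "B = box d a b" unfolding is_box_def by blast
  have "\<forall>i<k. a i \<le> b i" using ab(1) kd by auto
  then show ?thesis unfolding is_box_def using prj_box[OF kd ab(1)] ab(2) by blast
qed

lemma nu_image_le: "nu ((`) \<phi> ` C) \<le> nu C"
  unfolding nu_def
proof (rule Sup_mono)
  fix x assume "x \<in> {enat (card S) |S. S \<subseteq> (`) \<phi> ` C \<and> finite S \<and> disjoint S}"
  then obtain S where S: "x = enat (card S)" "S \<subseteq> (`) \<phi> ` C" "finite S" "disjoint S" by blast
  obtain U where U: "U \<subseteq> C" "inj_on ((`) \<phi>) U" "S = (`) \<phi> ` U"
    using S(2) subset_image_inj by metis
  have c: "card S = card U" using U card_image by metis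
  have f: "finite U" using finite_imageD[of "(`) \<phi>" U] S(3) U by simp
  have "disjoint U" unfolding disjoint_def
  proof (intro ballI impI)
    fix A B assume AB: "A \<in> U" "B \<in> U" "A \<noteq> B"
    then have "\<phi> ` A \<noteq> \<phi> ` B" using U(2) unfolding inj_on_def by metis
    moreover have "\<phi> ` A \<in> S" "\<phi> ` B \<in> S" unfolding U(3) using AB by (auto intro: imageI)
    ultimately have "\<phi> ` A \<inter> \<phi> ` B = {}" using S(4) unfolding disjoint_def by auto
    then show "A \<inter> B = {}" by auto
  qed
  then have "enat (card U) \<in> {enat (card S) |S. S \<subseteq> C \<and> finite S \<and> disjoint S}" using U(1) f by blast
  then show "\<exists>y\<in>{enat (card S) |S. S \<subseteq> C \<and> finite S \<and> disjoint S}. x \<le> y" using S(1) c by auto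
qed

lemma nu_mono: "G \<subseteq> F \<Longrightarrow> nu G \<le> nu F"
  unfolding nu_def by (rule Sup_subset_mono) blast

lemma tau_lift:
  assumes C: "\<forall>B\<in>C. is_box d B" and kd: "Suc k = d"
    and cr: "\<forall>B\<in>C. lo k B \<le> c \<and> c \<le> hi k B"
  shows "tau C \<le> tau ((`) (prj k) ` C)"
proof (rule tau_ge)
  fix Q assume Q: "finite Q" "\<forall>B\<in>(`) (prj k) ` C. Q \<inter> B \<noteq> {}"
  have "tau C \<le> enat (card ((\<lambda>y. y(k := c)) ` Q))"
  proof (rule tau_le)
    show "finite ((\<lambda>y. y(k := c)) ` Q)" using Q(1) by simp
    show "\<forall>B\<in>C. (\<lambda>y. y(k := c)) ` Q \<inter> B \<noteq> {}"
    proof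
      fix B assume B: "B \<in> C"
      then have "prj k ` B \<in> (`) (prj k) ` C" by (rule imageI)
      have "Q \<inter> prj k ` B \<noteq> {}" using Q(2) B by simp
      then obtain x where x: "x \<in> B" "prj k x \<in> Q" by auto
      have bx: "is_box d B" using C B by simp
      have "x(k := c) \<in> B" unfolding mem_iff[OF bx]
      proof (intro conjI allI impI)
        fix i assume "i < d"
        then show "lo i B \<le> (x(k := c)) i" "(x(k := c)) i \<le> hi i B"
          using mem_bounds[OF bx x(1)] cr B by (cases "i = k"; simp)+
      next
        fix i assume "d \<le> i"
        then show "(x(k := c)) i = 0" using mem_zero[OF bx x(1)] kd by simp
      qed
      moreover have "(prj k x)(k := c) = x(k := c)" unfolding prj_def by simp
      ultimately have "x(k := c) \<in> (\<lambda>y. y(k := c)) ` Q \<inter> B" using x(2) by (metis IntI imageI)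
      then show "(\<lambda>y. y(k := c)) ` Q \<inter> B \<noteq> {}" by blast
    qed
  qed
  also have "\<dots> \<le> enat (card Q)" using card_image_le[OF Q(1)] by simp
  finally show "tau C \<le> enat (card Q)" .
qed


lemma split_step:
  assumes d: "Suc k = d" and F: "\<forall>B\<in>F. is_box d B" and nF: "nu F \<le> enat m"
    and hm: "m \<le> 2 * h + 1"
    and nbig: "\<not> nu F \<le> enat h"
  shows "\<exists>c. nu {B\<in>F. hi k B < c} \<le> enat h \<and> nu {B\<in>F. c < lo k B} \<le> enat h"
proof -
  have kd: "k < d" using d by simp
  define big where "big c \<longleftrightarrow> (\<exists>R. R \<subseteq> F \<and> finite R \<and> disjoint R \<and> h < card R \<and> (\<forall>B\<in>R. hi k B < c))" for c
  have K1: "nu {B\<in>F. hi k B < c} \<le> enat h" if "\<not> big c" for c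
    unfolding nu_le_iff
  proof (intro allI impI)
    fix S assume S: "S \<subseteq> {B\<in>F. hi k B < c} \<and> finite S \<and> disjoint S"
    show "card S \<le> h"
    proof (rule ccontr)
      assume "\<not> card S \<le> h"
      then have "big c" unfolding big_def using S by (intro exI[of _ S]) auto
      then show False using that by simp
    qed
  qed
  have mF: "card S \<le> m" if "S \<subseteq> F" "finite S" "disjoint S" for S
    using nF that unfolding nu_le_iff by blast
  have K2: "card S \<le> h" if allbig: "\<forall>c'>c. big c'" and S: "S \<subseteq> F" "finite S" "disjoint S"
    and Sc: "\<forall>B\<in>S. c < lo k B" for c S
  proof (cases "S = {}")
    case True then show ?thesis by simp
  next
    case False
    define \<mu> where "\<mu> = Min (lo k ` S)"
    have mu_le: "\<mu> \<le> lo k B" if "B \<in> S" for B unfolding \<mu>_def using S(2) that by simp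
    have "\<mu> \<in> lo k ` S" unfolding \<mu>_def using S(2) False by (intro Min_in) auto
    then have cmu: "c < \<mu>" using Sc by auto
    define c' where "c' = (c + \<mu>) / 2"
    have c': "c < c'" "c' < \<mu>" unfolding c'_def using cmu by auto
    then obtain R where R: "R \<subseteq> F" "finite R" "disjoint R" "h < card R" "\<forall>B\<in>R. hi k B < c'"
      using allbig unfolding big_def by blast
    have sepRS: "A \<inter> B = {}" if "A \<in> R" "B \<in> S" for A B
    proof (rule ccontr)
      assume "A \<inter> B \<noteq> {}"
      then obtain x where "x \<in> A" "x \<in> B" by blast
      then have "x k \<le> hi k A" "lo k B \<le> x k"
        using mem_bounds[of d A x k] mem_bounds[of d B x k] F R(1) S(1) that kd by auto
      then show False using R(5) that(1) mu_le[OF that(2)] c' by fastforce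
    qed
    have RS: "R \<inter> S = {}"
    proof (rule ccontr)
      assume "R \<inter> S \<noteq> {}"
      then obtain B where B: "B \<in> R" "B \<in> S" by blast
      then have "B \<inter> B = {}" by (rule sepRS)
      then show False using box_nonempty[of d B] F B S(1) by auto
    qed
    have "disjoint (R \<union> S)"
    proof (rule disjoint_union[OF R(3) S(3)])
      show "\<Union>R \<inter> \<Union>S = {}" using sepRS by blast
    qed
    then have "card (R \<union> S) \<le> m" using R S by (intro mF) auto
    then have "card R + card S \<le> m" using RS R(2) S(2) by (simp add: card_Un_disjoint)
    then show ?thesis using R(4) hm by linarith
  qed
  obtain R0 where R0: "R0 \<subseteq> F" "finite R0" "disjoint R0" "h < card R0"
    using nbig unfolding nu_le_iff by auto
  have R0ne: "R0 \<noteq> {}" using R0(4) by auto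
  define M where "M = Max (hi k ` R0)"
  have bigM: "big c" if "M < c" for c
  proof -
    have "\<forall>B\<in>R0. hi k B < c" using that R0(2) unfolding M_def by (auto intro: le_less_trans[OF Max_ge])
    then show ?thesis unfolding big_def using R0 by blast
  qed
  define Ss where "Ss = {c. \<not> big c}"
  have Ssne: "Ss \<noteq> {}"
  proof
    assume "Ss = {}"
    then have allbig: "\<forall>c. big c" unfolding Ss_def by auto
    define c0 where "c0 = Min (lo k ` R0) - 1"
    have "\<forall>B\<in>R0. c0 < lo k B" unfolding c0_def using R0(2) by (auto intro: le_less_trans[OF Min_le] simp: algebra_simps)
    then have "card R0 \<le> h" using K2[of c0 R0] allbig R0 by blast
    then show False using R0(4) by simp
  qed
  have bdd: "bdd_above Ss"
  proof (rule bdd_aboveI)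
    fix c assume "c \<in> Ss"
    then show "c \<le> M" using bigM unfolding Ss_def by force
  qed
  define cs where "cs = Sup Ss"
  have nbcs: "\<not> big cs"
  proof
    assume "big cs"
    then obtain R where R: "R \<subseteq> F" "finite R" "disjoint R" "h < card R" "\<forall>B\<in>R. hi k B < cs"
      unfolding big_def by blast
    have Rne: "R \<noteq> {}" using R(4) by auto
    define M' where "M' = Max (hi k ` R)"
    have "M' \<in> hi k ` R" unfolding M'_def using R(2) Rne by (intro Max_in) auto
    then have "M' < cs" using R(5) by auto
    then obtain c where c: "c \<in> Ss" "M' < c" using less_cSup_iff[OF Ssne bdd] unfolding cs_def by blast
    have "\<forall>B\<in>R. hi k B < c" using R(2) c(2) unfolding M'_def by (auto intro: le_less_trans[OF Max_ge])
    then have "big c" unfolding big_def using R by blast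
    then show False using c(1) unfolding Ss_def by simp
  qed
  have abig: "\<forall>c'>cs. big c'"
  proof (intro allI impI)
    fix c' assume "cs < c'"
    show "big c'"
    proof (rule ccontr)
      assume "\<not> big c'"
      then have "c' \<in> Ss" unfolding Ss_def by simp
      then have "c' \<le> cs" unfolding cs_def by (rule cSup_upper[OF _ bdd])
      then show False using \<open>cs < c'\<close> by simp
    qed
  qed
  have "nu {B\<in>F. cs < lo k B} \<le> enat h" unfolding nu_le_iff
  proof (intro allI impI)
    fix S assume S: "S \<subseteq> {B\<in>F. cs < lo k B} \<and> finite S \<and> disjoint S"
    then show "card S \<le> h" using K2[OF abig] by blast
  qed
  then show ?thesis using K1[OF nbcs] by blast
qed


lemma arith_a:
  assumes m2: "2 \<le> m" and h: "h = m div 2" and rh: "0 \<le> rh" "2 * rh \<le> rr"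
  shows "real h + log 2 (real h) * rh \<le> real m + log 2 (real m) * rr"
proof -
  have h1: "1 \<le> h" "h \<le> m" using m2 h by auto
  have l0: "0 \<le> log 2 (real h)" using h1 by simp
  have lle: "log 2 (real h) \<le> log 2 (real m)" using h1 by simp
  have "log 2 (real h) * rh \<le> log 2 (real m) * rr"
    by (rule mult_mono) (use lle rh l0 in auto)
  then show ?thesis using h1 by simp
qed

lemma arith_b:
  assumes m2: "2 \<le> m" and h: "h = m div 2" and rh: "0 \<le> rh" "2 * rh \<le> rr"
  shows "2 * (real h + log 2 (real h) * rh) + rr \<le> real m + log 2 (real m) * rr"
proof -
  have h1: "1 \<le> h" "2 * h \<le> m" using m2 h by auto
  have l0: "0 \<le> log 2 (real h)" using h1 by simp
  have "log 2 (real (2 * h)) = 1 + log 2 (real h)" using h1 by (simp add: log_mult)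
  moreover have "log 2 (real (2 * h)) \<le> log 2 (real m)" using h1 by simp
  ultimately have lle: "log 2 (real h) \<le> log 2 (real m) - 1" by simp
  have rr0: "0 \<le> rr" using rh by simp
  have "2 * (log 2 (real h) * rh) \<le> log 2 (real h) * rr"
    using mult_left_mono[OF rh(2) l0] by (simp add: algebra_simps)
  also have "\<dots> \<le> (log 2 (real m) - 1) * rr" by (rule mult_right_mono[OF lle rr0])
  finally have "2 * (log 2 (real h) * rh) \<le> (log 2 (real m) - 1) * rr" .
  then show ?thesis using h1 by (simp add: algebra_simps)
qed

lemma main_claim:
  assumes d: "2 \<le> d"
  shows "1 \<le> m \<Longrightarrow> \<forall>B\<in>F. is_box d B \<Longrightarrow> nu F \<le> enat m \<Longrightarrow>
    ereal_of_enat (tau F) \<le> ereal (real m) + ereal (log 2 (real m)) * f_box m (d - 1)"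
proof (induction m arbitrary: F rule: less_induct)
  case (less m)
  define e where "e = d - 1"
  have e0: "0 < e" and de: "Suc e = d" using d e_def by auto
  show ?case
  proof (cases "m = 1")
    case True
    have "tau F \<le> enat 1" using base_case less.prems True by simp
    then have "ereal_of_enat (tau F) \<le> ereal_of_enat (enat 1)" by (simp only: ereal_of_enat_le_iff)
    also have "ereal_of_enat (enat 1) = ereal 1" by (simp only: ereal_of_enat_simps of_nat_1)
    finally have "ereal_of_enat (tau F) \<le> ereal 1" .
    moreover have "ereal (real m) + ereal (log 2 (real m)) * f_box m (d - 1) = ereal 1"
    proof -
      have z: "ereal (log 2 (real m)) = 0" using True by (simp add: zero_ereal_def)
      have "(0::ereal) * f_box m (d - 1) = 0" by (cases "f_box m (d - 1)") (simp_all add: zero_ereal_def)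
      then show ?thesis unfolding z using True by simp
    qed
    ultimately show ?thesis by simp
  next
    case False
    then have m2: "2 \<le> m" using less.prems(1) by simp
    define h where "h = m div 2"
    have h1: "1 \<le> h" "h < m" "m \<le> 2*h+1" "h + h \<le> m" using m2 h_def by auto
    define r where "r = f_box m e"
    have r0: "0 \<le> r" using f_box_nonneg[OF e0] r_def by simp
    have lm: "0 < log 2 (real m)" using m2 by simp
    show ?thesis
    proof (cases "r = \<infinity>")
      case True
      then have "ereal (log 2 (real m)) * f_box m (d - 1) = \<infinity>" using lm unfolding r_def e_def by simp
      then have "ereal (real m) + ereal (log 2 (real m)) * f_box m (d - 1) = \<infinity>" by simp
      then show ?thesis by (simp only:) simp
    next
      case False
      then obtain rr where rr: "r = ereal rr" "0 \<le> rr" using r0 by (cases r) auto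
      have ss: "f_box h e + f_box h e \<le> f_box m e"
        using superadd[OF e0, of h h] f_box_mono[OF e0 h1(4)] by (rule order_trans)
      have fh0: "0 \<le> f_box h e" by (rule f_box_nonneg[OF e0])
      obtain rh where rh: "f_box h e = ereal rh" "0 \<le> rh" "2 * rh \<le> rr"
      proof (cases "f_box h e")
        case (real x)
        then have "ereal (x + x) \<le> ereal rr" using ss rr r_def by simp
        then show ?thesis using that[of x] real fh0 by simp
      next
        case PInf
        then show ?thesis using ss rr r_def by simp
      next
        case MInf
        then show ?thesis using fh0 by simp
      qed
      have IH: "ereal_of_enat (tau G) \<le> ereal (real h + log 2 (real h) * rh)"
        if "\<forall>B\<in>G. is_box d B" "nu G \<le> enat h" for G
        using less.IH[OF h1(2) h1(1) that] rh(1) unfolding e_def by simp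
      have goalR: "ereal (real m) + ereal (log 2 (real m)) * f_box m (d - 1) = ereal (real m + log 2 (real m) * rr)"
        using rr r_def e_def by simp
      show ?thesis
      proof (cases "nu F \<le> enat h")
        case True
        have "ereal_of_enat (tau F) \<le> ereal (real h + log 2 (real h) * rh)" by (rule IH[OF less.prems(2) True])
        also have "\<dots> \<le> ereal (real m + log 2 (real m) * rr)" using arith_a[OF m2 h_def rh(2,3)] by simp
        finally show ?thesis using goalR by simp
      next
        case False
        obtain c where c: "nu {B\<in>F. hi e B < c} \<le> enat h" "nu {B\<in>F. c < lo e B} \<le> enat h"
          using split_step[OF de less.prems(2) less.prems(3) h1(3) False] by blast
        define A where "A = {B\<in>F. hi e B < c}"
        define U where "U = {B\<in>F. c < lo e B}"
        define C where "C = {B\<in>F. lo e B \<le> c \<and> c \<le> hi e B}"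
        have FAUC: "F = A \<union> U \<union> C" unfolding A_def U_def C_def by auto
        have bA: "\<forall>B\<in>A. is_box d B" "\<forall>B\<in>U. is_box d B" "\<forall>B\<in>C. is_box d B"
          using less.prems(2) unfolding A_def U_def C_def by auto
        have tA: "ereal_of_enat (tau A) \<le> ereal (real h + log 2 (real h) * rh)"
          using IH[OF bA(1)] c(1) unfolding A_def by simp
        have tU: "ereal_of_enat (tau U) \<le> ereal (real h + log 2 (real h) * rh)"
          using IH[OF bA(2)] c(2) unfolding U_def by simp
        define H where "H = (`) (prj e) ` C"
        have tCH: "tau C \<le> tau H" unfolding H_def
          by (rule tau_lift[OF bA(3) de]) (auto simp: C_def)
        have "nu H \<le> nu C" unfolding H_def by (rule nu_image_le)
        also have "\<dots> \<le> nu F" unfolding C_def by (rule nu_mono) auto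
        also have "\<dots> \<le> enat m" by (rule less.prems(3))
        finally have nH: "nu H \<le> enat m" .
        then obtain j where j: "nu H = enat j" using enat_ile by blast
        have jm: "j \<le> m" using nH j by simp
        have bH: "\<forall>B\<in>H. is_box e B" unfolding H_def using bA(3) is_box_prj[OF de] by auto
        have "ereal_of_enat (tau C) \<le> ereal_of_enat (tau H)" using tCH by simp
        also have "\<dots> \<le> f_box j e" by (rule tau_le_f_box[OF bH j])
        also have "\<dots> \<le> f_box m e" by (rule f_box_mono[OF e0 jm])
        finally have tC: "ereal_of_enat (tau C) \<le> ereal rr" using rr r_def by simp
        have "tau F \<le> tau (A \<union> U) + tau C" unfolding FAUC by (rule tau_union)
        also have "\<dots> \<le> tau A + tau U + tau C" using tau_union[of A U] by (intro add_right_mono)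
        finally have "ereal_of_enat (tau F) \<le> ereal_of_enat (tau A + tau U + tau C)" by simp
        also have "\<dots> = ereal_of_enat (tau A) + ereal_of_enat (tau U) + ereal_of_enat (tau C)"
          by (simp add: ereal_of_enat_add)
        also have "\<dots> \<le> ereal (real h + log 2 (real h) * rh) + ereal (real h + log 2 (real h) * rh) + ereal rr"
          by (intro add_mono tA tU tC)
        also have "\<dots> = ereal (2 * (real h + log 2 (real h) * rh) + rr)" by simp
        also have "\<dots> \<le> ereal (real m + log 2 (real m) * rr)" using arith_b[OF m2 h_def rh(2,3)] by simp
        finally show ?thesis using goalR by simp
      qed
    qed
  qed
qed

theorem lemma1:
  fixes n d :: nat
  assumes "n \<ge> 1" and "d \<ge> 2"
  shows "f_box n d \<le> ereal (real n) + ereal (log 2 (real n)) * f_box n (d - 1)"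
  unfolding f_box_SUP[of n d]
proof (rule SUP_least)
  fix F assume "F \<in> {F. (\<forall>B\<in>F. is_box d B) \<and> nu F = enat n}"
  then show "ereal_of_enat (tau F) \<le> ereal (real n) + ereal (log 2 (real n)) * f_box n (d - 1)"
    using main_claim[OF assms(2) assms(1)] by simp
qed


end
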